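(* Let $s>0$, $r>0$, $L_\infty>0$, $L_0>0$, and let $\alpha,\beta$ satisfy $0<\alpha\le 1$, $0<\beta\le1$, with $n:=\alpha+\beta$. Assume $n\neq 1$ and $\alpha\neq 1$. Set $L_*:=L_\infty-L_0$. Let $k$ be a positive solution, defined on an interval containing $0$, of the Cauchy problem $$\dot k = s\left(L_\infty-L_*e^{-rt}\right)^{n-1}k^{\alpha}-rL_*e^{-rt}k,\qquad k(0)=k_0.$$ Then for all $t\ge 0$ in that interval $$k(t)=\left( e^{-(\alpha-1)L_*e^{-rt}}\left(k_0^{1-\alpha}e^{(\alpha-1)L_*}-(\alpha-1)\int_0^t\mathcal L(\tau)\,d\tau\right)\right)^{\frac{1}{1-\alpha}},$$ where $$\mathcal L(\tau):=\frac{s\left(L_\infty-L_*e^{-r\tau}\right)^{n}\exp\!\left[r\tau+(\alpha-1)L_*e^{-r\tau}\right]}{L_\infty\left(e^{r\tau}-1\right)+L_0}.$$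
   Context: $\dot{}$ denotes the derivative with respect to time $t$. The function $L(t)=L_\infty-L_*e^{-rt}$ (von Bertalanffy labor force) is positive for $t\ge 0$ under the given assumptions, and the equation comes from a Solow-Swan type model with Cobb-Douglas production $F(K,L)=K^\alpha L^\beta$. *)

theory Defs
  imports "HOL-Analysis.Analysis"
begin

end

theory Submission
  imports Defs
begin

theorem theorem2:
  fixes s r Linf L0 \<alpha> \<beta> k0 :: real
    and k :: "real \<Rightarrow> real" and I :: "real set"
  assumes "s > 0" "r > 0" "Linf > 0" "L0 > 0"
    and "0 < \<alpha>" "\<alpha> \<le> 1" "0 < \<beta>" "\<beta> \<le> 1"
    and "\<alpha> + \<beta> \<noteq> 1" "\<alpha> \<noteq> 1"
    and "is_interval I" "0 \<in> I"
    and "\<And>t. t \<in> I \<Longrightarrow> k t > 0"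
    and "\<And>t. t \<in> I \<Longrightarrow>
          (k has_real_derivative
             (s * (Linf - (Linf - L0) * exp (- r * t)) powr (\<alpha> + \<beta> - 1) * k t powr \<alpha>
              - r * (Linf - L0) * exp (- r * t) * k t)) (at t within I)"
    and "k 0 = k0"
  shows "\<forall>t \<in> I. t \<ge> 0 \<longrightarrow>
    k t = (exp (- (\<alpha> - 1) * (Linf - L0) * exp (- r * t)) *
             (k0 powr (1 - \<alpha>) * exp ((\<alpha> - 1) * (Linf - L0))
              - (\<alpha> - 1) * integral {0..t} (\<lambda>\<tau>.
                  s * (Linf - (Linf - L0) * exp (- r * \<tau>)) powr (\<alpha> + \<beta>)
                    * exp (r * \<tau> + (\<alpha> - 1) * (Linf - L0) * exp (- r * \<tau>))
                  / (Linf * (exp (r * \<tau>) - 1) + L0))))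
           powr (1 / (1 - \<alpha>))"
proof (intro ballI impI)
  fix t assume tI: "t \<in> I" and t0: "0 \<le> t"
  define Ls where "Ls = Linf - L0"
  define Lf where "Lf = (\<lambda>\<tau>. Linf - Ls * exp (- r * \<tau>))"
  define E where "E = (\<lambda>\<tau>. exp ((\<alpha> - 1) * Ls * exp (- r * \<tau>)))"
  define f where "f = (\<lambda>\<tau>. s * Lf \<tau> powr (\<alpha> + \<beta> - 1) * E \<tau>)"
  define h where "h = (\<lambda>\<tau>. k \<tau> powr (1 - \<alpha>) * E \<tau> / (1 - \<alpha>))"
  have a1: "1 - \<alpha> \<noteq> 0" using assms(10) by auto
  have sub: "{0..t} \<subseteq> I"
  proof
    fix x assume "x \<in> {0..t}"
    then show "x \<in> I" using assms(11,12) tI unfolding is_interval_1 by (meson atLeastAtMost_iff)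
  qed
  have Lpos: "Lf \<tau> > 0" if "\<tau> \<ge> 0" for \<tau>
  proof (cases "Ls \<ge> 0")
    case True
    have "exp (- r * \<tau>) \<le> 1" using that assms(2) by simp
    hence "Ls * exp (- r * \<tau>) \<le> Ls" using True by (simp add: mult_left_le)
    then show ?thesis using assms(4) unfolding Lf_def Ls_def by linarith
  next
    case False
    have "Ls * exp (- r * \<tau>) < 0" using False by (simp add: mult_neg_pos)
    then show ?thesis using assms(3) unfolding Lf_def by linarith
  qed
  have der: "(h has_real_derivative f x) (at x within {0..t})" if x: "x \<in> {0..t}" for x
  proof -
    have xI: "x \<in> I" using x sub by auto
    have kx: "k x > 0" using assms(13) xI by auto
    define k' where "k' = s * Lf x powr (\<alpha> + \<beta> - 1) * k x powr \<alpha> - r * Ls * exp (- r * x) * k x"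
    have dk: "(k has_real_derivative k') (at x within {0..t})"
      using DERIV_subset[OF assms(14)[OF xI] sub] unfolding k'_def Lf_def Ls_def by simp
    have dkp: "((\<lambda>\<tau>. k \<tau> powr (1 - \<alpha>)) has_real_derivative
        ((1 - \<alpha>) * k x powr (1 - \<alpha> - 1)) * k') (at x within {0..t})"
      by (rule DERIV_chain2[OF has_real_derivative_powr[OF kx] dk])
    have dE: "(E has_real_derivative E x * ((\<alpha> - 1) * Ls * (exp (- r * x) * (- r)))) (at x within {0..t})"
      unfolding E_def by (auto intro!: derivative_eq_intros)
    have dh: "(h has_real_derivative
       (((1 - \<alpha>) * k x powr (1 - \<alpha> - 1)) * k' * E x + (E x * ((\<alpha> - 1) * Ls * (exp (- r * x) * (- r)))) * k x powr (1 - \<alpha>)) / (1 - \<alpha>)) (at x within {0..t})"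
      unfolding h_def by (rule DERIV_cdivide[OF DERIV_mult[OF dkp dE]])
    define p where "p = k x powr (- \<alpha>)"
    have p1: "p * k x powr \<alpha> = 1" unfolding p_def using kx by (simp add: powr_add[symmetric])
    have p2: "p * k x = k x powr (1 - \<alpha>)" unfolding p_def using kx
      using powr_add[of "k x" "- \<alpha>" 1] by simp
    have eqv: "(((1 - \<alpha>) * k x powr (1 - \<alpha> - 1)) * k' * E x + (E x * ((\<alpha> - 1) * Ls * (exp (- r * x) * (- r)))) * k x powr (1 - \<alpha>)) / (1 - \<alpha>) = f x"
    proof -
      have "k x powr (1 - \<alpha> - 1) = p" unfolding p_def by simp
      hence "(((1 - \<alpha>) * k x powr (1 - \<alpha> - 1)) * k' * E x + (E x * ((\<alpha> - 1) * Ls * (exp (- r * x) * (- r)))) * k x powr (1 - \<alpha>))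
         = (1 - \<alpha>) * (s * Lf x powr (\<alpha> + \<beta> - 1) * (p * k x powr \<alpha>) - r * Ls * exp (- r * x) * (p * k x)) * E x
           + (E x * ((\<alpha> - 1) * Ls * (exp (- r * x) * (- r)))) * k x powr (1 - \<alpha>)"
        unfolding k'_def by (simp add: algebra_simps)
      also have "\<dots> = (1 - \<alpha>) * f x" unfolding p1 p2 f_def by (simp add: algebra_simps)
      finally show ?thesis using a1 by simp
    qed
    show ?thesis using dh unfolding eqv .
  qed
  have HI: "(f has_integral (h t - h 0)) {0..t}"
    by (rule fundamental_theorem_of_calculus[OF t0])
       (use der in \<open>simp add: has_real_derivative_iff_has_vector_derivative\<close>)
  have ieq: "integral {0..t} (\<lambda>\<tau>.
                  s * (Linf - (Linf - L0) * exp (- r * \<tau>)) powr (\<alpha> + \<beta>)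
                    * exp (r * \<tau> + (\<alpha> - 1) * (Linf - L0) * exp (- r * \<tau>))
                  / (Linf * (exp (r * \<tau>) - 1) + L0)) = integral {0..t} f"
  proof (rule integral_cong)
    fix \<tau> assume "\<tau> \<in> {0..t}"
    hence Lp: "Lf \<tau> > 0" using Lpos by auto
    have den: "Linf * (exp (r * \<tau>) - 1) + L0 = exp (r * \<tau>) * Lf \<tau>"
    proof -
      have "exp (r * \<tau>) * exp (- r * \<tau>) = 1" by (simp add: exp_add[symmetric])
      then show ?thesis unfolding Lf_def Ls_def by (simp add: algebra_simps)
    qed
    have pw: "Lf \<tau> powr (\<alpha> + \<beta>) = Lf \<tau> powr (\<alpha> + \<beta> - 1) * Lf \<tau>"
      using Lp powr_add[of "Lf \<tau>" "\<alpha> + \<beta> - 1" 1] by simp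
    have ex: "exp (r * \<tau> + (\<alpha> - 1) * Ls * exp (- r * \<tau>)) = exp (r * \<tau>) * E \<tau>"
      unfolding E_def by (simp add: exp_add)
    show "s * (Linf - (Linf - L0) * exp (- r * \<tau>)) powr (\<alpha> + \<beta>)
                    * exp (r * \<tau> + (\<alpha> - 1) * (Linf - L0) * exp (- r * \<tau>))
                  / (Linf * (exp (r * \<tau>) - 1) + L0) = f \<tau>"
    proof -
      have LfE: "Linf - (Linf - L0) * exp (- r * \<tau>) = Lf \<tau>" unfolding Lf_def Ls_def by simp
      show ?thesis unfolding den LfE unfolding Ls_def[symmetric] ex pw f_def
        using Lp by (simp add: field_simps)
    qed
  qed
  have intf: "integral {0..t} f = h t - h 0" using HI by (rule integral_unique)
  have E0: "E 0 = exp ((\<alpha> - 1) * Ls)" unfolding E_def by simp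
  have Et: "exp (- (\<alpha> - 1) * Ls * exp (- r * t)) * E t = 1"
    unfolding E_def by (simp add: exp_add[symmetric] algebra_simps)
  have kt: "k t > 0" using assms(13) tI by auto
  have "exp (- (\<alpha> - 1) * Ls * exp (- r * t)) *
             (k0 powr (1 - \<alpha>) * exp ((\<alpha> - 1) * Ls) - (\<alpha> - 1) * integral {0..t} f)
       = exp (- (\<alpha> - 1) * Ls * exp (- r * t)) * (k t powr (1 - \<alpha>) * E t)"
  proof -
    have d: "h t - h 0 = (k t powr (1 - \<alpha>) * E t - k0 powr (1 - \<alpha>) * E 0) / (1 - \<alpha>)"
      unfolding h_def using assms(15) by (simp add: diff_divide_distrib)
    have "(\<alpha> - 1) * (h t - h 0) = - (k t powr (1 - \<alpha>) * E t - k0 powr (1 - \<alpha>) * E 0)"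
    proof -
      have g: "(\<alpha> - 1) * (D / (1 - \<alpha>)) = - D" for D :: real
      proof -
        have "(\<alpha> - 1) * (D / (1 - \<alpha>)) = - ((1 - \<alpha>) * (D / (1 - \<alpha>)))" by (metis minus_diff_eq mult_minus_left)
        also have "\<dots> = - D" using a1 by simp
        finally show ?thesis .
      qed
      show ?thesis unfolding d by (rule g)
    qed
    then show ?thesis unfolding intf E0[symmetric] by simp
  qed
  also have "\<dots> = k t powr (1 - \<alpha>)" using Et by (simp add: algebra_simps)
  finally have main: "exp (- (\<alpha> - 1) * Ls * exp (- r * t)) *
             (k0 powr (1 - \<alpha>) * exp ((\<alpha> - 1) * Ls) - (\<alpha> - 1) * integral {0..t} f) = k t powr (1 - \<alpha>)" .
  have "k t = (k t powr (1 - \<alpha>)) powr (1 / (1 - \<alpha>))"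
    using kt a1 by (simp add: powr_powr)
  then show "k t = (exp (- (\<alpha> - 1) * (Linf - L0) * exp (- r * t)) *
             (k0 powr (1 - \<alpha>) * exp ((\<alpha> - 1) * (Linf - L0))
              - (\<alpha> - 1) * integral {0..t} (\<lambda>\<tau>.
                  s * (Linf - (Linf - L0) * exp (- r * \<tau>)) powr (\<alpha> + \<beta>)
                    * exp (r * \<tau> + (\<alpha> - 1) * (Linf - L0) * exp (- r * \<tau>))
                  / (Linf * (exp (r * \<tau>) - 1) + L0))))
           powr (1 / (1 - \<alpha>))"
    unfolding ieq unfolding Ls_def[symmetric] main .
qed

end
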